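(* Assume the setting below with general missingness: the $M_i(1),M_i(0)\in\{0,1\}$ are arbitrary constants whose values may depend on the potential outcomes in an arbitrary way. Fix $\boldsymbol\delta=(\delta_1,\dots,\delta_n)^\intercal\in\mathbb R^n$ and define $\boldsymbol Y^{\texttt{g}}_{\boldsymbol Z,\boldsymbol\delta}(0)\in\overline{\mathbb R}^n$ by $$Y^{\texttt{g}}_{\boldsymbol Z,\boldsymbol\delta,i}(0)=\begin{cases}Y_i-\delta_i,& Z_i=1,\ M_i=1,\\ -\infty,& Z_i=1,\ M_i=0,\\ Y_i,& Z_i=0,\ M_i=1,\\ +\infty,& Z_i=0,\ M_i=0,\end{cases}\qquad 1\le i\le n.$$ Then $p^{\texttt{g}}_{\boldsymbol Z,\boldsymbol\delta}:=G_{\mathrm R,\phi}\big(t_{\mathrm R,\phi}(\boldsymbol Z,\boldsymbol Y^{\texttt{g}}_{\boldsymbol Z,\boldsymbol\delta}(0))\big)$ is a valid p-value for the sharp null $H_{\boldsymbol\delta}:\boldsymbol\tau=\boldsymbol\delta$; that is, if $H_{\boldsymbol\delta}$ holds then $\mathbb P(p^{\texttt{g}}_{\boldsymbol Z,\boldsymbol\delta}\le\alpha)\le\alpha$ for every $\alpha\in(0,1)$.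
   Context: There are $n$ units. Unit $i$ has fixed potential outcomes $Y_i^\star(0),Y_i^\star(1)\in\mathbb R$ and fixed potential missingness indicators $M_i(0),M_i(1)\in\{0,1\}$; $\tau_i=Y_i^\star(1)-Y_i^\star(0)$ and $\boldsymbol\tau=(\tau_1,\dots,\tau_n)^\intercal$. The assignment $\boldsymbol Z=(Z_1,\dots,Z_n)^\intercal$ is drawn from a completely randomized experiment (CRE): for fixed positive integers $n_1,n_0$ with $n_1+n_0=n$, $\boldsymbol Z$ is uniform over the $\binom{n}{n_1}$ vectors in $\{0,1\}^n$ with exactly $n_1$ ones, independently of all potential outcomes and potential missingness indicators; probabilities are over $\boldsymbol Z$. The observed missingness indicator is $M_i=Z_iM_i(1)+(1-Z_i)M_i(0)$. The realized outcome $Z_iY_i^\star(1)+(1-Z_i)Y_i^\star(0)$ is observed, and denoted $Y_i$, only when $M_i=1$. Test statistics: let $\overline{\mathbb R}=\mathbb R\cup\{\pm\infty\}$. For $1\le i,j\le n$ and $y,y'\in\overline{\mathbb R}$ let $\psi_{i,j}(y,y')=\mathbf 1\{y>y'\}+\mathbf 1\{y=y'\}\mathbf 1\{i\ge j\}$, and for $\boldsymbol y\in\overline{\mathbb R}^n$ let $\mathrm{rank}_i(\boldsymbol y)=\sum_{j=1}^n\psi_{i,j}(y_i,y_j)$. Let $\phi$ be a fixed nondecreasing real function on the nonnegative integers. For $\boldsymbol z\in\{0,1\}^n$, $\boldsymbol y\in\overline{\mathbb R}^n$, $t_{\mathrm R,\phi}(\boldsymbol z,\boldsymbol y)$ denotes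 either the rank-sum statistic $\sum_{i=1}^n z_i\phi(\mathrm{rank}_i(\boldsymbol y))$ or the Mann–Whitney-type statistic $\sum_{i=1}^n z_i\phi\big(\sum_{j=1}^n(1-z_j)\psi_{i,j}(y_i,y_j)\big)$; the result holds for either choice. $G_{\mathrm R,\phi}(c)=\mathbb P(t_{\mathrm R,\phi}(\boldsymbol A,\boldsymbol y_0)\ge c)$, where $\boldsymbol A$ is drawn from the CRE and $\boldsymbol y_0\in\mathbb R^n$ is any fixed vector (this does not depend on $\boldsymbol y_0$). *)

theory Defs
  imports "HOL-Probability.Probability"
begin

(* Units are indexed by 0..<n. An assignment is z :: nat => bool (z i = True means
   treated), with z i = False for i >= n. *)

definition cre :: "nat \<Rightarrow> nat \<Rightarrow> (nat \<Rightarrow> bool) set" where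
  "cre n n1 = {z. (\<forall>i. n \<le> i \<longrightarrow> \<not> z i) \<and> card {i\<in>{0..<n}. z i} = n1}"

definition cre_prob :: "nat \<Rightarrow> nat \<Rightarrow> ((nat \<Rightarrow> bool) \<Rightarrow> bool) \<Rightarrow> real" where
  "cre_prob n n1 E = measure_pmf.prob (pmf_of_set (cre n n1)) {z. E z}"

definition psi :: "nat \<Rightarrow> nat \<Rightarrow> ereal \<Rightarrow> ereal \<Rightarrow> nat" where
  "psi i j y y' = (if y > y' then 1 else 0) + (if y = y' \<and> i \<ge> j then 1 else 0)"

definition rank :: "nat \<Rightarrow> (nat \<Rightarrow> ereal) \<Rightarrow> nat \<Rightarrow> nat" where
  "rank n y i = (\<Sum>j<n. psi i j (y i) (y j))"

datatype stat_kind = RankSum | MannWhitney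

definition t_stat :: "stat_kind \<Rightarrow> (nat \<Rightarrow> real) \<Rightarrow> nat \<Rightarrow> (nat \<Rightarrow> bool) \<Rightarrow> (nat \<Rightarrow> ereal) \<Rightarrow> real" where
  "t_stat k phi n z y = (case k of
      RankSum \<Rightarrow> (\<Sum>i<n. (if z i then 1 else 0) * phi (rank n y i))
    | MannWhitney \<Rightarrow> (\<Sum>i<n. (if z i then 1 else 0) *
          phi (\<Sum>j<n. (if z j then 0 else 1) * psi i j (y i) (y j))))"

definition G_stat :: "stat_kind \<Rightarrow> (nat \<Rightarrow> real) \<Rightarrow> nat \<Rightarrow> nat \<Rightarrow> (nat \<Rightarrow> real) \<Rightarrow> real \<Rightarrow> real" where
  "G_stat k phi n n1 y0 c = cre_prob n n1 (\<lambda>a. t_stat k phi n a (\<lambda>i. ereal (y0 i)) \<ge> c)"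

(* imputed control vector Y^g_{Z,delta}(0); M1 i / M0 i = True means outcome observed *)
definition Yg :: "(nat \<Rightarrow> real) \<Rightarrow> (nat \<Rightarrow> real) \<Rightarrow> (nat \<Rightarrow> bool) \<Rightarrow> (nat \<Rightarrow> bool)
                  \<Rightarrow> (nat \<Rightarrow> real) \<Rightarrow> (nat \<Rightarrow> bool) \<Rightarrow> nat \<Rightarrow> ereal" where
  "Yg Y1 Y0 M1 M0 \<delta> z i =
     (let M = (if z i then M1 i else M0 i);
          Y = (if z i then Y1 i else Y0 i)
      in if z i then (if M then ereal (Y - \<delta> i) else -\<infinity>)
         else (if M then ereal Y else \<infinity>))"

end

theory Submission
  imports Defs
begin


definition kle :: "ereal \<Rightarrow> nat \<Rightarrow> ereal \<Rightarrow> nat \<Rightarrow> bool" where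
  "kle a i b j \<longleftrightarrow> a < b \<or> (a = b \<and> i \<le> j)"

lemma kle_refl: "kle a i a i" by (simp add: kle_def)
lemma kle_trans: "kle a i b j \<Longrightarrow> kle b j c l \<Longrightarrow> kle a i c l"
  unfolding kle_def by auto
lemma kle_total: "kle a i b j \<or> kle b j a i"
  unfolding kle_def by auto
lemma kle_antisym: "kle a i b j \<Longrightarrow> kle b j a i \<Longrightarrow> i = j"
  unfolding kle_def by auto
lemma kle_mono: "a' \<le> a \<Longrightarrow> b \<le> b' \<Longrightarrow> kle a i b j \<Longrightarrow> kle a' i b' j"
  unfolding kle_def by (metis le_less less_le_trans order_le_less_trans)

lemma psi_kle: "psi i j a b = (if kle b j a i then 1 else 0)"
  unfolding psi_def kle_def by auto

lemma rank_card: "rank n y i = card {j\<in>{..<n}. kle (y j) j (y i) i}"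
  unfolding rank_def psi_kle by (simp add: sum.If_cases, rule arg_cong[where f=card], auto)

lemma rank_mono: "kle (y j) j (y i) i \<Longrightarrow> rank n y j \<le> rank n y i"
  unfolding rank_card by (rule card_mono) (auto intro: kle_trans)

lemma rank_le_iff:
  assumes "i < n" "j < n"
  shows "rank n y j \<le> rank n y i \<longleftrightarrow> kle (y j) j (y i) i"
proof
  assume h: "rank n y j \<le> rank n y i"
  show "kle (y j) j (y i) i"
  proof (rule ccontr)
    assume nk: "\<not> kle (y j) j (y i) i"
    then have k: "kle (y i) i (y j) j" using kle_total by blast
    have ij: "i \<noteq> j" using nk kle_refl by blast
    have sub: "{l\<in>{..<n}. kle (y l) l (y i) i} \<subseteq> {l\<in>{..<n}. kle (y l) l (y j) j}"
      using k by (auto intro: kle_trans)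
    have "j \<in> {l\<in>{..<n}. kle (y l) l (y j) j} - {l\<in>{..<n}. kle (y l) l (y i) i}"
      using nk assms kle_refl by auto
    then have "{l\<in>{..<n}. kle (y l) l (y i) i} \<subset> {l\<in>{..<n}. kle (y l) l (y j) j}"
      using sub by blast
    then have "rank n y i < rank n y j" unfolding rank_card
      by (intro psubset_card_mono) auto
    then show False using h by simp
  qed
next
  assume "kle (y j) j (y i) i" then show "rank n y j \<le> rank n y i" by (rule rank_mono)
qed

lemma rank_inj: "inj_on (rank n y) {..<n}"
proof (rule inj_onI)
  fix i j assume ij: "i \<in> {..<n}" "j \<in> {..<n}" and e: "rank n y i = rank n y j"
  have "kle (y j) j (y i) i" using rank_le_iff[of i n j y] ij e by simp
  moreover have "kle (y i) i (y j) j" using rank_le_iff[of j n i y] ij e by simp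
  ultimately show "i = j" using kle_antisym by blast
qed

lemma rank_range: "i < n \<Longrightarrow> rank n y i \<in> {1..n}"
proof -
  assume "i < n"
  have "rank n y i \<le> card {..<n}" unfolding rank_card by (rule card_mono) auto
  moreover have "rank n y i \<ge> 1"
  proof -
    have "i \<in> {j\<in>{..<n}. kle (y j) j (y i) i}" using \<open>i < n\<close> kle_refl by simp
    then have "0 < card {j\<in>{..<n}. kle (y j) j (y i) i}"
      by (intro card_gt_0_iff[THEN iffD2]) auto
    then show ?thesis unfolding rank_card by simp
  qed
  ultimately show ?thesis by simp
qed

lemma rank_bij: "bij_betw (rank n y) {..<n} {1..n}"
proof -
  have "rank n y ` {..<n} \<subseteq> {1..n}" using rank_range by auto
  moreover have "card (rank n y ` {..<n}) = card {1..n}"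
    using card_image[OF rank_inj] by simp
  ultimately have "rank n y ` {..<n} = {1..n}"
    by (simp add: card_subset_eq)
  then show ?thesis using rank_inj by (simp add: bij_betw_def)
qed

definition F :: "stat_kind \<Rightarrow> (nat \<Rightarrow> real) \<Rightarrow> nat \<Rightarrow> (nat \<Rightarrow> bool) \<Rightarrow> (nat \<Rightarrow> nat) \<Rightarrow> real" where
  "F k phi n z r = (case k of
      RankSum \<Rightarrow> (\<Sum>i<n. (if z i then 1 else 0) * phi (r i))
    | MannWhitney \<Rightarrow> (\<Sum>i<n. (if z i then 1 else 0) *
          phi (\<Sum>j<n. (if z j then 0 else 1) * (if r j \<le> r i then 1 else 0))))"

lemma t_F: "t_stat k phi n z y = F k phi n z (rank n y)"
proof (cases k)
  case RankSum then show ?thesis by (simp add: t_stat_def F_def)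
next
  case MannWhitney
  have "\<And>i j. i < n \<Longrightarrow> j < n \<Longrightarrow> psi i j (y i) (y j) = (if rank n y j \<le> rank n y i then 1 else 0)"
    by (simp add: psi_kle rank_le_iff)
  then show ?thesis using MannWhitney unfolding t_stat_def F_def
    by (auto intro!: sum.cong arg_cong[where f=phi])
qed

lemma F_cong: "(\<And>i. i < n \<Longrightarrow> r i = r' i) \<Longrightarrow> F k phi n z r = F k phi n z r'"
  unfolding F_def by (cases k) (auto intro!: sum.cong)

lemma F_perm:
  assumes h: "bij_betw h {..<n} {..<n}"
  shows "F k phi n (z \<circ> h) (r \<circ> h) = F k phi n z r"
proof (cases k)
  case RankSum
  have "F k phi n (z \<circ> h) (r \<circ> h) = (\<Sum>i<n. (if z (h i) then 1 else 0) * phi (r (h i)))"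
    unfolding F_def RankSum by (simp only: stat_kind.simps comp_apply)
  also have "\<dots> = (\<Sum>i<n. (if z i then 1 else 0) * phi (r i))"
    by (rule sum.reindex_bij_betw[OF h, of "\<lambda>i. (if z i then 1 else 0) * phi (r i)"])
  also have "\<dots> = F k phi n z r"
    unfolding F_def RankSum by (simp only: stat_kind.simps)
  finally show ?thesis .
next
  case MannWhitney
  have inner: "(\<Sum>j<n. (if z (h j) then 0 else 1) * (if r (h j) \<le> r (h i) then 1 else 0))
      = (\<Sum>j<n. (if z j then 0 else 1) * (if r j \<le> r (h i) then 1 else (0::nat)))" for i
    by (rule sum.reindex_bij_betw[OF h, of "\<lambda>j. (if z j then 0 else 1) * (if r j \<le> r (h i) then 1 else 0)"])
  have "F k phi n (z \<circ> h) (r \<circ> h) = (\<Sum>i<n. (if z (h i) then 1 else 0) *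
          phi (\<Sum>j<n. (if z (h j) then 0 else 1) * (if r (h j) \<le> r (h i) then 1 else 0)))"
    unfolding F_def MannWhitney by (simp only: stat_kind.simps comp_apply)
  also have "\<dots> = (\<Sum>i<n. (if z (h i) then 1 else 0) *
          phi (\<Sum>j<n. (if z j then 0 else 1) * (if r j \<le> r (h i) then 1 else 0)))"
    by (simp only: inner)
  also have "\<dots> = (\<Sum>i<n. (if z i then 1 else 0) *
          phi (\<Sum>j<n. (if z j then 0 else 1) * (if r j \<le> r i then 1 else 0)))"
    by (rule sum.reindex_bij_betw[OF h, of "\<lambda>i. (if z i then 1 else 0) *
          phi (\<Sum>j<n. (if z j then 0 else 1) * (if r j \<le> r i then 1 else (0::nat)))"])
  also have "\<dots> = F k phi n z r"
    unfolding F_def MannWhitney by (simp only: stat_kind.simps)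
  finally show ?thesis .
qed

lemma cre_comp:
  assumes "bij g" and gn: "\<And>i. i < n \<longleftrightarrow> g i < n" and zc: "z \<in> cre n n1"
  shows "z \<circ> g \<in> cre n n1"
proof -
  have gn1: "i < n \<Longrightarrow> g i < n" for i using gn by blast
  have gn2: "g i < n \<Longrightarrow> i < n" for i using gn by blast
  have "g ` {i\<in>{0..<n}. z (g i)} = {j\<in>{0..<n}. z j}"
  proof (rule equalityI)
    show "g ` {i \<in> {0..<n}. z (g i)} \<subseteq> {j \<in> {0..<n}. z j}"
    proof
      fix x assume "x \<in> g ` {i \<in> {0..<n}. z (g i)}"
      then obtain i where "i < n" "z (g i)" "x = g i" by auto
      then show "x \<in> {j \<in> {0..<n}. z j}" using gn1 by simp
    qed
    show "{j \<in> {0..<n}. z j} \<subseteq> g ` {i \<in> {0..<n}. z (g i)}"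
    proof
      fix j assume j: "j \<in> {j \<in> {0..<n}. z j}"
      obtain i where i: "g i = j" using assms(1) by (metis bij_pointE)
      have "i < n" using gn2[of i] i j by simp
      then have "i \<in> {i \<in> {0..<n}. z (g i)}" using i j by simp
      then show "j \<in> g ` {i \<in> {0..<n}. z (g i)}" using i by blast
    qed
  qed
  moreover have "inj_on g {i\<in>{0..<n}. z (g i)}"
    using assms(1) bij_is_inj inj_on_subset by blast
  ultimately have e: "card {i\<in>{0..<n}. z (g i)} = card {j\<in>{0..<n}. z j}"
    by (metis card_image)
  have c2: "\<forall>i. n \<le> i \<longrightarrow> \<not> z (g i)"
  proof (intro allI impI)
    fix i assume "n \<le> i"
    then have "\<not> g i < n" using gn2[of i] by linarith
    then have "n \<le> g i" by linarith
    then show "\<not> z (g i)" using zc unfolding cre_def by blast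
  qed
  have c1: "card {j\<in>{0..<n}. z j} = n1" using zc unfolding cre_def by blast
  show ?thesis unfolding cre_def
  proof (rule CollectI, rule conjI)
    show "\<forall>i\<ge>n. \<not> (z \<circ> g) i" using c2 by simp
    show "card {i\<in>{0..<n}. (z \<circ> g) i} = n1" using e c1 by simp
  qed
qed

lemma bij_ext:
  assumes "bij_betw h {..<n} {..<n}"
  shows "bij (\<lambda>i. if i < n then h i else i)"
proof -
  let ?g = "\<lambda>i. if i < n then h i else i"
  have hi: "\<And>i. i < n \<Longrightarrow> h i < n" using bij_betwE[OF assms] by simp
  have "inj ?g"
  proof (rule injI)
    fix a b assume e: "?g a = ?g b"
    show "a = b"
    proof (cases "a < n"; cases "b < n")
      assume ab: "a < n" "b < n"
      then have "h a = h b" using e by simp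
      then show ?thesis using inj_onD[OF bij_betw_imp_inj_on[OF assms]] ab by simp
    qed (use e hi in \<open>auto split: if_splits\<close>)
  qed
  moreover have "surj ?g"
  proof -
    have "x \<in> range ?g" for x
    proof (cases "x < n")
      case True
      then obtain i where "i < n" "h i = x" using assms
        by (metis bij_betw_def imageE lessThan_iff)
      then show ?thesis by (metis (mono_tags, lifting) rangeI)
    next
      case False then show ?thesis by (metis (mono_tags, lifting) rangeI)
    qed
    then show ?thesis by auto
  qed
  ultimately show ?thesis by (simp add: bij_def)
qed

lemma cre_bij:
  assumes "bij g" "\<And>i. i < n \<longleftrightarrow> g i < n"
  shows "bij_betw (\<lambda>z. z \<circ> g) (cre n n1) (cre n n1)"
proof -
  have ig: "bij (inv g)" using assms(1) bij_imp_bij_inv by blast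
  have ig2: "\<And>i. i < n \<longleftrightarrow> inv g i < n"
    using assms by (metis bij_inv_eq_iff)
  have "inj_on (\<lambda>z. z \<circ> g) (cre n n1)"
  proof (rule inj_onI)
    fix a b assume "a \<circ> g = b \<circ> g"
    note eq = this
    show "a = b"
    proof
      fix x obtain i where "g i = x" using assms(1) by (metis bij_pointE)
      then show "a x = b x" using fun_cong[OF eq, of i] by simp
    qed
  qed
  moreover have "(\<lambda>z. z \<circ> g) ` cre n n1 = cre n n1"
  proof
    show "(\<lambda>z. z \<circ> g) ` cre n n1 \<subseteq> cre n n1" using cre_comp[OF assms] by auto
    show "cre n n1 \<subseteq> (\<lambda>z. z \<circ> g) ` cre n n1"
    proof
      fix w assume w: "w \<in> cre n n1"
      have "w \<circ> inv g \<in> cre n n1" using cre_comp[OF ig ig2 w] .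
      moreover have "w = (w \<circ> inv g) \<circ> g" using assms(1)
        by (simp add: comp_assoc bij_is_inj)
      ultimately show "w \<in> (\<lambda>z. z \<circ> g) ` cre n n1" by blast
    qed
  qed
  ultimately show ?thesis by (simp add: bij_betw_def)
qed

lemma card_invariance:
  "card {z\<in>cre n n1. c \<le> t_stat k phi n z y} = card {z\<in>cre n n1. c \<le> t_stat k phi n z y'}"
proof -
  let ?r = "rank n y" and ?r' = "rank n y'"
  define h where "h = (\<lambda>i. inv_into {..<n} ?r' (?r i))"
  have b1: "bij_betw ?r {..<n} {1..n}" and b2: "bij_betw ?r' {..<n} {1..n}" by (rule rank_bij)+
  have hb: "bij_betw h {..<n} {..<n}" unfolding h_def
    using bij_betw_trans[OF b1 bij_betw_inv_into[OF b2]] by (simp add: comp_def)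
  have rh: "\<And>i. i < n \<Longrightarrow> ?r' (h i) = ?r i" unfolding h_def
    using b1 b2 by (meson bij_betwE bij_betw_inv_into_right lessThan_iff)
  define g where "g = (\<lambda>i. if i < n then h i else i)"
  have gb: "bij g" unfolding g_def by (rule bij_ext[OF hb])
  have gn: "\<And>i. i < n \<longleftrightarrow> g i < n" unfolding g_def using bij_betwE[OF hb] by auto
  have gh: "bij_betw g {..<n} {..<n}" using hb unfolding g_def
    by (rule bij_betw_cong[THEN iffD1, rotated]) auto
  have key: "t_stat k phi n (z \<circ> g) y = t_stat k phi n z y'" for z
  proof -
    have "t_stat k phi n (z \<circ> g) y = F k phi n (z \<circ> g) (?r' \<circ> g)"
      unfolding t_F[of k phi n "z \<circ> g" y] by (rule F_cong) (simp add: g_def rh)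
    also have "\<dots> = F k phi n z ?r'" by (rule F_perm[OF gh])
    finally show ?thesis using t_F[of k phi n z y'] by simp
  qed
  have cb: "bij_betw (\<lambda>z. z \<circ> g) (cre n n1) (cre n n1)" by (rule cre_bij[OF gb gn])
  let ?A = "{z\<in>cre n n1. c \<le> t_stat k phi n z y'}" and ?B = "{z\<in>cre n n1. c \<le> t_stat k phi n z y}"
  have i1: "inj_on (\<lambda>z. z \<circ> g) ?A"
    by (rule inj_on_subset[OF bij_betw_imp_inj_on[OF cb]]) blast
  have i2: "(\<lambda>z. z \<circ> g) ` ?A \<subseteq> ?B"
  proof
    fix w assume "w \<in> (\<lambda>z. z \<circ> g) ` ?A"
    then obtain z where z: "z \<in> cre n n1" "c \<le> t_stat k phi n z y'" "w = z \<circ> g" by blast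
    have "z \<circ> g \<in> cre n n1" using bij_betwE[OF cb] z(1) by blast
    then show "w \<in> ?B" using z key[of z] by simp
  qed
  have i3: "?B \<subseteq> (\<lambda>z. z \<circ> g) ` ?A"
  proof
    fix w assume w: "w \<in> ?B"
    then have "w \<in> (\<lambda>z. z \<circ> g) ` cre n n1" using cb by (simp add: bij_betw_def)
    then obtain z where z: "z \<in> cre n n1" "w = z \<circ> g" by blast
    have "c \<le> t_stat k phi n w y" using w by blast
    then have "c \<le> t_stat k phi n (z \<circ> g) y" by (simp only: z(2))
    then have "c \<le> t_stat k phi n z y'" by (simp only: key)
    then have "z \<in> ?A" using z(1) by blast
    then show "w \<in> (\<lambda>z. z \<circ> g) ` ?A" using z(2) by blast
  qed
  have im: "(\<lambda>z. z \<circ> g) ` ?A = ?B" by (rule equalityI[OF i2 i3])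
  have "bij_betw (\<lambda>z. z \<circ> g) ?A ?B" unfolding bij_betw_def by (rule conjI[OF i1 im])
  then have "card ?A = card ?B" by (rule bij_betw_same_card)
  then show ?thesis by (rule sym)
qed




lemma abel:
  fixes phi :: "nat \<Rightarrow> real"
  assumes "finite T" "\<forall>i\<in>T. r i \<le> n"
  shows "(\<Sum>i\<in>T. phi (r i)) = card T * phi 0 + (\<Sum>s<n. (phi (Suc s) - phi s) * card {i\<in>T. s < r i})"
proof -
  have one: "phi (r i) = phi 0 + (\<Sum>s<n. if s < r i then phi (Suc s) - phi s else 0)" if "i \<in> T" for i
  proof -
    have "(\<Sum>s<n. if s < r i then phi (Suc s) - phi s else 0) = (\<Sum>s\<in>{..<n} \<inter> {s. s < r i}. phi (Suc s) - phi s)"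
      by (simp add: sum.inter_restrict)
    also have "{..<n} \<inter> {s. s < r i} = {..<r i}" using assms(2) that by auto
    also have "(\<Sum>s\<in>{..<r i}. phi (Suc s) - phi s) = phi (r i) - phi 0"
      by (rule sum_lessThan_telescope)
    finally show ?thesis by simp
  qed
  have "(\<Sum>i\<in>T. phi (r i)) = (\<Sum>i\<in>T. phi 0 + (\<Sum>s<n. if s < r i then phi (Suc s) - phi s else 0))"
    using one by (rule sum.cong[OF refl])
  also have "\<dots> = card T * phi 0 + (\<Sum>i\<in>T. \<Sum>s<n. if s < r i then phi (Suc s) - phi s else 0)"
    by (simp add: sum.distrib)
  also have "(\<Sum>i\<in>T. \<Sum>s<n. if s < r i then phi (Suc s) - phi s else 0)
      = (\<Sum>s<n. \<Sum>i\<in>T. if s < r i then phi (Suc s) - phi s else 0)"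
    by (rule sum.swap)
  also have "\<dots> = (\<Sum>s<n. (phi (Suc s) - phi s) * card {i\<in>T. s < r i})"
  proof (rule sum.cong[OF refl])
    fix s
    have "(\<Sum>i\<in>T. if s < r i then phi (Suc s) - phi s else 0) = (\<Sum>i\<in>T \<inter> {i. s < r i}. phi (Suc s) - phi s)"
      using assms(1) by (simp add: sum.If_cases)
    also have "T \<inter> {i. s < r i} = {i\<in>T. s < r i}" by auto
    finally show "(\<Sum>i\<in>T. if s < r i then phi (Suc s) - phi s else 0) = (phi (Suc s) - phi s) * card {i\<in>T. s < r i}"
      by simp
  qed
  finally show ?thesis .
qed

lemma card_bij_filter: "bij_betw f A B \<Longrightarrow> card {x\<in>A. P (f x)} = card {y\<in>B. P y}"
proof -
  assume b: "bij_betw f A B"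
  have i: "inj_on f {x\<in>A. P (f x)}"
    by (rule inj_on_subset[OF bij_betw_imp_inj_on[OF b]]) blast
  have im: "f ` {x\<in>A. P (f x)} = {y\<in>B. P y}"
  proof (rule equalityI)
    show "f ` {x\<in>A. P (f x)} \<subseteq> {y\<in>B. P y}"
    proof
      fix y assume "y \<in> f ` {x\<in>A. P (f x)}"
      then obtain x where x: "x \<in> A" "P (f x)" "y = f x" by blast
      have "f x \<in> B" using bij_betwE[OF b] x(1) by blast
      then show "y \<in> {y\<in>B. P y}" using x by blast
    qed
    show "{y\<in>B. P y} \<subseteq> f ` {x\<in>A. P (f x)}"
    proof
      fix y assume y: "y \<in> {y\<in>B. P y}"
      then have "y \<in> f ` A" using b by (simp add: bij_betw_def)
      then obtain x where x: "x \<in> A" "y = f x" by blast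
      then have "x \<in> {x\<in>A. P (f x)}" using y by blast
      then show "y \<in> f ` {x\<in>A. P (f x)}" using x(2) by blast
    qed
  qed
  have "bij_betw f {x\<in>A. P (f x)} {y\<in>B. P y}" unfolding bij_betw_def by (rule conjI[OF i im])
  then show ?thesis by (rule bij_betw_same_card)
qed

lemma count_mono:
  assumes tr: "\<forall>i<n. z i \<longrightarrow> y' i \<le> y i" and co: "\<forall>i<n. \<not> z i \<longrightarrow> y i \<le> y' i"
  shows "card {i. i < n \<and> z i \<and> s < rank n y' i} \<le> card {i. i < n \<and> z i \<and> s < rank n y i}"
proof -
  let ?U = "{i. i < n \<and> s < rank n y i}" and ?U' = "{i. i < n \<and> s < rank n y' i}"
  let ?TU = "{i. i < n \<and> z i \<and> s < rank n y i}" and ?TU' = "{i. i < n \<and> z i \<and> s < rank n y' i}"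
  let ?CU = "{i. i < n \<and> \<not> z i \<and> s < rank n y i}" and ?CU' = "{i. i < n \<and> \<not> z i \<and> s < rank n y' i}"
  have cu: "card ?U = card ?U'"
  proof -
    have "card {x\<in>{..<n}. s < rank n y x} = card {x\<in>{1..n}. s < x}" by (rule card_bij_filter[OF rank_bij])
    moreover have "card {x\<in>{..<n}. s < rank n y' x} = card {x\<in>{1..n}. s < x}" by (rule card_bij_filter[OF rank_bij])
    moreover have "{x\<in>{..<n}. s < rank n y x} = ?U" "{x\<in>{..<n}. s < rank n y' x} = ?U'" by auto
    ultimately show ?thesis by simp
  qed
  have fin: "finite {i. i < n \<and> P i}" for P by (rule finite_subset[of _ "{..<n}"]) auto
  have p1: "card ?U = card ?TU + card ?CU"
  proof -
    have e: "?U = ?TU \<union> ?CU" by auto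
    have "card (?TU \<union> ?CU) = card ?TU + card ?CU"
      by (rule card_Un_disjoint) (use fin[of "\<lambda>i. z i \<and> s < rank n y i"] fin[of "\<lambda>i. \<not> z i \<and> s < rank n y i"] in auto)
    then show ?thesis using e by simp
  qed
  have p2: "card ?U' = card ?TU' + card ?CU'"
  proof -
    have e: "?U' = ?TU' \<union> ?CU'" by auto
    have "card (?TU' \<union> ?CU') = card ?TU' + card ?CU'"
      by (rule card_Un_disjoint) (use fin[of "\<lambda>i. z i \<and> s < rank n y' i"] fin[of "\<lambda>i. \<not> z i \<and> s < rank n y' i"] in auto)
    then show ?thesis using e by simp
  qed
  show ?thesis
  proof (cases "?TU' \<subseteq> ?TU")
    case True then show ?thesis by (intro card_mono) (use fin[of "\<lambda>i. z i \<and> s < rank n y i"] in auto)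
  next
    case False
    then obtain t where t: "t < n" "z t" "s < rank n y' t" "\<not> s < rank n y t" by auto
    have "?CU \<subseteq> ?CU'"
    proof
      fix c assume c: "c \<in> ?CU"
      then have "\<not> kle (y c) c (y t) t" using t rank_mono[of y c t n] by auto
      then have k: "kle (y t) t (y c) c" using kle_total by blast
      have "kle (y' t) t (y' c) c" using kle_mono[OF _ _ k] tr co t c by auto
      then have "rank n y' t \<le> rank n y' c" by (rule rank_mono)
      then show "c \<in> ?CU'" using c t by auto
    qed
    then have "card ?CU \<le> card ?CU'" by (intro card_mono) (use fin[of "\<lambda>i. \<not> z i \<and> s < rank n y' i"] in auto)
    then show ?thesis using cu p1 p2 by linarith
  qed
qed

lemma t_mono:
  assumes mph: "mono phi" and tr: "\<forall>i<n. z i \<longrightarrow> y' i \<le> y i" and co: "\<forall>i<n. \<not> z i \<longrightarrow> y i \<le> y' i"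
  shows "t_stat k phi n z y' \<le> t_stat k phi n z y"
proof (cases k)
  case MannWhitney
  have "(\<Sum>i<n. (if z i then 1 else 0) * phi (\<Sum>j<n. (if z j then 0 else 1) * psi i j (y' i) (y' j)))
     \<le> (\<Sum>i<n. (if z i then 1 else 0) * phi (\<Sum>j<n. (if z j then 0 else 1) * psi i j (y i) (y j)))"
  proof (rule sum_mono)
    fix i assume i: "i \<in> {..<n}"
    show "(if z i then 1 else 0) * phi (\<Sum>j<n. (if z j then 0 else 1) * psi i j (y' i) (y' j))
        \<le> (if z i then 1 else 0) * phi (\<Sum>j<n. (if z j then 0 else 1) * psi i j (y i) (y j))"
    proof (cases "z i")
      case True
      have "(\<Sum>j<n. (if z j then 0 else 1) * psi i j (y' i) (y' j)) \<le> (\<Sum>j<n. (if z j then 0 else 1) * psi i j (y i) (y j))"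
      proof (rule sum_mono)
        fix j assume j: "j \<in> {..<n}"
        show "(if z j then 0 else 1) * psi i j (y' i) (y' j) \<le> (if z j then 0 else 1) * psi i j (y i) (y j)"
        proof (cases "z j")
          case False
          have "kle (y' j) j (y' i) i \<Longrightarrow> kle (y j) j (y i) i"
            using kle_mono[of "y j" "y' j" "y' i" "y i" j i] tr co i j True False by auto
          then show ?thesis using False by (simp add: psi_kle)
        qed simp
      qed
      then show ?thesis using True mph by (simp add: monoD)
    qed simp
  qed
  then show ?thesis using MannWhitney by (simp add: t_stat_def)
next
  case RankSum
  let ?T = "{i\<in>{..<n}. z i}"
  have ts: "t_stat k phi n z w = (\<Sum>i\<in>?T. phi (rank n w i))" for w
  proof -
    have "t_stat k phi n z w = (\<Sum>i<n. if z i then phi (rank n w i) else 0)"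
      using RankSum by (auto simp: t_stat_def intro!: sum.cong)
    also have "\<dots> = (\<Sum>i\<in>?T. phi (rank n w i))" by (rule sum.inter_filter[symmetric]) simp
    finally show ?thesis .
  qed
  have ab: "t_stat k phi n z w = card ?T * phi 0 + (\<Sum>s<n. (phi (Suc s) - phi s) * card {i\<in>?T. s < rank n w i})" for w
    unfolding ts by (rule abel) (use rank_range in auto)
  have "(\<Sum>s<n. (phi (Suc s) - phi s) * card {i\<in>?T. s < rank n y' i}) \<le> (\<Sum>s<n. (phi (Suc s) - phi s) * card {i\<in>?T. s < rank n y i})"
  proof (rule sum_mono)
    fix s
    have d: "0 \<le> phi (Suc s) - phi s" using mph by (simp add: monoD)
    have "card {i\<in>?T. s < rank n y' i} \<le> card {i\<in>?T. s < rank n y i}"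
      using count_mono[OF tr co, of s] by (simp add: conj_assoc)
    then show "(phi (Suc s) - phi s) * card {i\<in>?T. s < rank n y' i} \<le> (phi (Suc s) - phi s) * card {i\<in>?T. s < rank n y i}"
      using d by (simp add: mult_left_mono)
  qed
  then show ?thesis using ab[of y] ab[of y'] by linarith
qed

lemma valid:
  fixes T :: "'a \<Rightarrow> real" and \<alpha> :: real
  assumes "finite S" "0 \<le> \<alpha>"
  shows "card {z\<in>S. real (card {a\<in>S. T z \<le> T a}) \<le> \<alpha> * card S} \<le> \<alpha> * card S"
proof (cases "{z\<in>S. real (card {a\<in>S. T z \<le> T a}) \<le> \<alpha> * card S} = {}")
  case True then show ?thesis by (subst True) (simp add: assms)
next
  case False
  let ?E = "{z\<in>S. real (card {a\<in>S. T z \<le> T a}) \<le> \<alpha> * card S}"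
  have fE: "finite ?E" using assms by simp
  have "Min (T ` ?E) \<in> T ` ?E" using False fE by (intro Min_in) auto
  then obtain z0 where z0: "z0 \<in> ?E" "T z0 = Min (T ` ?E)" by auto
  have "\<forall>z\<in>?E. T z0 \<le> T z" using z0 fE by auto
  then have "?E \<subseteq> {a\<in>S. T z0 \<le> T a}" by auto
  then have "card ?E \<le> card {a\<in>S. T z0 \<le> T a}" using assms by (intro card_mono) auto
  then have "real (card ?E) \<le> real (card {a\<in>S. T z0 \<le> T a})" by simp
  moreover have "real (card {a\<in>S. T z0 \<le> T a}) \<le> \<alpha> * card S" using z0(1) by simp
  ultimately show ?thesis by linarith
qed



lemma cre_finite: "finite (cre n n1)"
proof -
  have "cre n n1 \<subseteq> (\<lambda>A i. i \<in> A) ` Pow {..<n}"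
  proof
    fix z assume "z \<in> cre n n1"
    then have "\<forall>i. n \<le> i \<longrightarrow> \<not> z i" unfolding cre_def by blast
    then have "z = (\<lambda>i. i \<in> {i. i < n \<and> z i})" by (intro ext) (metis (mono_tags) mem_Collect_eq not_less)
    moreover have "{i. i < n \<and> z i} \<in> Pow {..<n}" by auto
    ultimately show "z \<in> (\<lambda>A i. i \<in> A) ` Pow {..<n}" by blast
  qed
  then show ?thesis by (rule finite_subset) simp
qed

lemma cre_nonempty: "n1 \<le> n \<Longrightarrow> (\<lambda>i. i < n1) \<in> cre n n1"
proof -
  assume "n1 \<le> n"
  then have "{i\<in>{0..<n}. i < n1} = {0..<n1}" by auto
  then show ?thesis using \<open>n1 \<le> n\<close> unfolding cre_def by auto
qed

lemma cre_prob_card: "n1 \<le> n \<Longrightarrow> cre_prob n n1 E = card {z\<in>cre n n1. E z} / card (cre n n1)"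
proof -
  assume "n1 \<le> n"
  then have ne: "cre n n1 \<noteq> {}" using cre_nonempty by blast
  have "cre n n1 \<inter> {z. E z} = {z\<in>cre n n1. E z}" by auto
  then show ?thesis unfolding cre_prob_def
    using measure_pmf_of_set[OF ne cre_finite] by simp
qed

theorem theorem1:
  fixes n n1 n0 :: nat
    and Y1 Y0 \<delta> y0 :: "nat \<Rightarrow> real"
    and M1 M0 :: "nat \<Rightarrow> bool"
    and phi :: "nat \<Rightarrow> real"
    and k :: stat_kind
  assumes "0 < n1" and "0 < n0" and "n1 + n0 = n"
    and "mono phi"
    and "\<forall>i<n. Y1 i - Y0 i = \<delta> i"
    and "0 < \<alpha>" and "\<alpha> < 1"
  shows "cre_prob n n1 (\<lambda>z. G_stat k phi n n1 y0
            (t_stat k phi n z (Yg Y1 Y0 M1 M0 \<delta> z)) \<le> \<alpha>) \<le> \<alpha>"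
proof -
  have nn: "n1 \<le> n" using assms(3) by simp
  let ?S = "cre n n1"
  let ?N = "real (card ?S)"
  have Npos: "?N > 0" using cre_nonempty[OF nn] cre_finite[of n n1]
    by (metis card_gt_0_iff empty_iff of_nat_0_less_iff)
  define Y0e where "Y0e = (\<lambda>i. ereal (Y0 i))"
  define T where "T = (\<lambda>z. t_stat k phi n z Y0e)"
  have G: "G_stat k phi n n1 y0 c = card {a\<in>?S. c \<le> T a} / ?N" for c
    unfolding G_stat_def cre_prob_card[OF nn] T_def
    using card_invariance[of n n1 c k phi "\<lambda>i. ereal (y0 i)" Y0e] by simp
  have tle: "t_stat k phi n z (Yg Y1 Y0 M1 M0 \<delta> z) \<le> T z" for z
    unfolding T_def
  proof (rule t_mono[OF assms(4)])
    show "\<forall>i<n. z i \<longrightarrow> Yg Y1 Y0 M1 M0 \<delta> z i \<le> Y0e i"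
      using assms(5) by (auto simp: Yg_def Y0e_def Let_def)
    show "\<forall>i<n. \<not> z i \<longrightarrow> Y0e i \<le> Yg Y1 Y0 M1 M0 \<delta> z i"
      by (auto simp: Yg_def Y0e_def Let_def)
  qed
  have sub: "{z\<in>?S. G_stat k phi n n1 y0 (t_stat k phi n z (Yg Y1 Y0 M1 M0 \<delta> z)) \<le> \<alpha>}
      \<subseteq> {z\<in>?S. real (card {a\<in>?S. T z \<le> T a}) \<le> \<alpha> * ?N}"
  proof
    fix z assume z: "z \<in> {z\<in>?S. G_stat k phi n n1 y0 (t_stat k phi n z (Yg Y1 Y0 M1 M0 \<delta> z)) \<le> \<alpha>}"
    let ?t = "t_stat k phi n z (Yg Y1 Y0 M1 M0 \<delta> z)"
    have "{a\<in>?S. T z \<le> T a} \<subseteq> {a\<in>?S. ?t \<le> T a}" using tle[of z] by auto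
    then have "card {a\<in>?S. T z \<le> T a} \<le> card {a\<in>?S. ?t \<le> T a}"
      using cre_finite by (intro card_mono) auto
    moreover have "card {a\<in>?S. ?t \<le> T a} / ?N \<le> \<alpha>" using z G[of ?t] by simp
    then have "real (card {a\<in>?S. ?t \<le> T a}) \<le> \<alpha> * ?N" using Npos by (simp add: divide_le_eq)
    ultimately show "z \<in> {z\<in>?S. real (card {a\<in>?S. T z \<le> T a}) \<le> \<alpha> * ?N}" using z by simp
  qed
  have "real (card {z\<in>?S. G_stat k phi n n1 y0 (t_stat k phi n z (Yg Y1 Y0 M1 M0 \<delta> z)) \<le> \<alpha>})
      \<le> real (card {z\<in>?S. real (card {a\<in>?S. T z \<le> T a}) \<le> \<alpha> * ?N})"
    using sub cre_finite by (simp add: card_mono)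
  also have "\<dots> \<le> \<alpha> * ?N" using valid[OF cre_finite, where T=T and \<alpha>=\<alpha>] assms(6) by simp
  finally show ?thesis unfolding cre_prob_card[OF nn] using Npos by (simp add: divide_le_eq)
qed


end
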